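(* Let $\mathcal{X}\subseteq\mathbb{R}^d$ and let $k:\mathbb{R}^d\to\mathbb{R}$ be a continuous positive-definite function with $k(0)=1$; write $k(x,y):=k(x-y)$. Let $P$ be the probability measure on $\mathbb{R}^d$ with $k(\Delta)=\int e^{\sqrt{-1}\,\omega^\mathsf{T}\Delta}\,\mathrm{d}P(\omega)$. Let $\mu$ be a $\sigma$-finite measure on $\mathcal{X}\times\mathcal{X}$, for measurable $g$ on $\mathcal{X}^2$ set $\|g\|_\mu^2:=\int_{\mathcal{X}^2}g(x,y)^2\,\mathrm{d}\mu(x,y)$, and let $\mathcal{M}:=\mu(\mathcal{X}^2)$. Let $D$ be an even positive integer, let $\omega_1,\dots,\omega_{D/2}$ be i.i.d. with law $P$, define $$\tilde z(x):=\sqrt{\tfrac{2}{D}}\,\big(\sin(\omega_1^\mathsf{T}x),\cos(\omega_1^\mathsf{T}x),\dots,\sin(\omega_{D/2}^\mathsf{T}x),\cos(\omega_{D/2}^\mathsf{T}x)\big)^\mathsf{T},$$ and $\tilde f(x,y):=\tilde z(x)^\mathsf{T}\tilde z(y)-k(x-y)$. Then for every $\varepsilon>0$, $$\Pr\Big(\big|\|\tilde f\|_\mu^2-\mathbb{E}\|\tilde f\|_\mu^2\big|\ge\varepsilon\Big)\le 2\exp\Big(\frac{-D^3\varepsilon^2}{8(4D+1)^2\mathcal{M}^2}\Big)\le 2\exp\Big(\frac{-D\varepsilon^2}{200\,\mathcal{M}^2}\Big).$$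
   Context: The existence of $P$ follows from Bochner's theorem. The probability and expectation are over the random draw of $\omega_1,\dots,\omega_{D/2}$. *)

theory Defs
  imports "HOL-Probability.Probability"
begin

definition positive_definite_fun :: "('a::ab_group_add \<Rightarrow> real) \<Rightarrow> bool" where
  "positive_definite_fun k \<longleftrightarrow>
     (\<forall>(n::nat) (x::nat \<Rightarrow> 'a) (c::nat \<Rightarrow> real).
        (\<Sum>i<n. \<Sum>j<n. c i * c j * k (x i - x j)) \<ge> 0)"

text \<open>Random Fourier feature map: coordinate j (0-based, j < D) of z~(x).
  Coordinates 2i and 2i+1 are sin and cos of (omega_i . x), i < D/2 (0-based).\<close>
definition rff_z :: "nat \<Rightarrow> (nat \<Rightarrow> real^'d) \<Rightarrow> real^'d \<Rightarrow> nat \<Rightarrow> real" where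
  "rff_z D \<omega> x j = sqrt (2 / real D) *
     (if even j then sin (\<omega> (j div 2) \<bullet> x) else cos (\<omega> (j div 2) \<bullet> x))"

definition rff_err :: "nat \<Rightarrow> (real^'d \<Rightarrow> real) \<Rightarrow> (nat \<Rightarrow> real^'d) \<Rightarrow> real^'d \<Rightarrow> real^'d \<Rightarrow> real" where
  "rff_err D k \<omega> x y = (\<Sum>j<D. rff_z D \<omega> x j * rff_z D \<omega> y j) - k (x - y)"

definition sqnorm_mu :: "('a \<times> 'a) measure \<Rightarrow> ('a \<Rightarrow> 'a \<Rightarrow> real) \<Rightarrow> real" where
  "sqnorm_mu \<mu> g = (\<integral>p. (g (fst p) (snd p))\<^sup>2 \<partial>\<mu>)"

end

theory Submission
  imports Defs
begin


lemma sum_pairs: "(\<Sum>j<2*m. a j) = (\<Sum>i<m. a (2*i) + a (2*i+1))" for a :: "nat \<Rightarrow> real"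
  by (induction m) (simp_all add: algebra_simps)

lemma err_eq:
  assumes "D = 2*n"
  shows "rff_err D k w x y = (\<Sum>i<n. 2 / real D * cos (w i \<bullet> x - w i \<bullet> y)) - k (x - y)"
proof -
  define s where "s = sqrt (2 / real D)"
  have sq: "s * s = 2 / real D" unfolding s_def by simp
  have pair: "rff_z D w x (2*i) * rff_z D w y (2*i) + rff_z D w x (2*i+1) * rff_z D w y (2*i+1)
       = 2 / real D * cos (w i \<bullet> x - w i \<bullet> y)" for i
  proof -
    have "rff_z D w x (2*i) * rff_z D w y (2*i) + rff_z D w x (2*i+1) * rff_z D w y (2*i+1)
       = (s * s) * (cos (w i \<bullet> x) * cos (w i \<bullet> y) + sin (w i \<bullet> x) * sin (w i \<bullet> y))"
      unfolding rff_z_def s_def[symmetric] by (simp add: algebra_simps)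
    then show ?thesis by (simp only: sq cos_diff)
  qed
  have "(\<Sum>j<D. rff_z D w x j * rff_z D w y j) = (\<Sum>i<n. 2 / real D * cos (w i \<bullet> x - w i \<bullet> y))"
    using sum_pairs[of "\<lambda>j. rff_z D w x j * rff_z D w y j" n] pair assms by simp
  then show ?thesis unfolding rff_err_def by simp
qed

lemma sum_cos_bound:
  assumes "D = 2*n" "n > 0"
  shows "\<bar>\<Sum>i<n. 2 / real D * cos (t i)\<bar> \<le> 1"
proof -
  have "\<bar>\<Sum>i<n. 2 / real D * cos (t i)\<bar> \<le> (\<Sum>i<n. \<bar>2 / real D * cos (t i)\<bar>)" by (rule sum_abs)
  also have "\<dots> \<le> (\<Sum>i<n. 2 / real D)"
    by (intro sum_mono) (auto simp: abs_mult intro!: divide_right_mono)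
  also have "\<dots> = 1" using assms by simp
  finally show ?thesis .
qed

lemma sum_cos_diff:
  assumes "D = 2*n" "i < n" and that: "\<And>j. j \<noteq> i \<Longrightarrow> t' j = t j"
  shows "\<bar>(\<Sum>j<n. 2 / real D * cos (t' j)) - (\<Sum>j<n. 2 / real D * cos (t j))\<bar> \<le> 4 / real D"
proof -
  have fin: "finite {..<n}" by simp
  have iin: "i \<in> {..<n}" using assms by simp
  have "(\<Sum>j<n. 2 / real D * cos (t' j)) - (\<Sum>j<n. 2 / real D * cos (t j))
      = 2 / real D * cos (t' i) - 2 / real D * cos (t i)"
    using sum.remove[OF fin iin, of "\<lambda>j. 2 / real D * cos (t' j)"] sum.remove[OF fin iin, of "\<lambda>j. 2 / real D * cos (t j)"]
      sum.cong[OF refl, of "{..<n} - {i}" "\<lambda>j. 2 / real D * cos (t' j)" "\<lambda>j. 2 / real D * cos (t j)"] that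
    by auto
  also have "\<bar>\<dots>\<bar> \<le> 2 / real D * \<bar>cos (t' i)\<bar> + 2 / real D * \<bar>cos (t i)\<bar>"
    by (rule order_trans[OF abs_triangle_ineq4]) (simp add: abs_mult)
  also have "\<dots> \<le> 2 / real D * 1 + 2 / real D * 1"
    by (intro add_mono mult_left_mono) auto
  finally show ?thesis by simp
qed

lemma arith1:
  fixes D :: real assumes D: "D \<ge> 1"
  shows "1/200 \<le> D\<^sup>2 / (8 * (4*D+1)\<^sup>2)" "D\<^sup>2 / (8 * (4*D+1)\<^sup>2) \<le> 1/64"
proof -
  have p: "8 * (4*D+1)\<^sup>2 > 0" using D by simp
  have a: "(4*D+1)\<^sup>2 \<le> (5*D)\<^sup>2" by (rule power_mono) (use D in auto)
  have b: "(3*D)\<^sup>2 \<le> (4*D+1)\<^sup>2" by (rule power_mono) (use D in auto)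
  show "1/200 \<le> D\<^sup>2 / (8 * (4*D+1)\<^sup>2)"
    using p a by (simp add: field_simps power_mult_distrib)
  have b': "8 * D\<^sup>2 \<le> (4*D+1)\<^sup>2" 
  proof -
    have "(3*D)\<^sup>2 = 9 * D\<^sup>2" by (simp add: power2_eq_square)
    moreover have "D\<^sup>2 \<ge> 0" by simp
    ultimately show ?thesis using b by linarith
  qed
  show "D\<^sup>2 / (8 * (4*D+1)\<^sup>2) \<le> 1/64"
    using p b' by (simp add: field_simps)
qed

lemma comp_meas:
  assumes "sets P = sets borel"
  shows "(\<lambda>w. w i) \<in> borel_measurable (PiM I (\<lambda>_. P))"
proof (cases "i \<in> I")
  case True
  have "(\<lambda>w. w i) \<in> PiM I (\<lambda>_. P) \<rightarrow>\<^sub>M P" by (rule measurable_component_singleton[OF True])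
  then show ?thesis using measurable_cong_sets[OF refl assms] by blast
next
  case False
  show ?thesis
    apply (subst measurable_cong[where g="\<lambda>w. undefined"])
     apply (simp add: space_PiM PiE_arb[OF _ False])
    apply (rule measurable_const)
    apply simp
    done
qed

lemma fm_abs_le:
  fixes h :: "_ \<Rightarrow> real"
  assumes "finite_measure M" "h \<in> borel_measurable M" "\<And>x. x \<in> space M \<Longrightarrow> \<bar>h x\<bar> \<le> C"
  shows "\<bar>\<integral>x. h x \<partial>M\<bar> \<le> C * measure M (space M)"
proof -
  interpret finite_measure M by fact
  have int: "integrable M h"
    by (rule integrable_const_bound[where B=C]) (use assms in auto)
  have "\<bar>\<integral>x. h x \<partial>M\<bar> \<le> (\<integral>x. \<bar>h x\<bar> \<partial>M)"
    using integral_norm_bound[of M h] by simp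
  also have "\<dots> \<le> (\<integral>x. C \<partial>M)"
    by (intro integral_mono) (use assms int in auto)
  also have "\<dots> = C * measure M (space M)" by simp
  finally show ?thesis .
qed



lemma pint_abs_le:
  fixes h :: "_ \<Rightarrow> real"
  assumes "prob_space M" "h \<in> borel_measurable M" "\<And>x. x \<in> space M \<Longrightarrow> \<bar>h x\<bar> \<le> C"
  shows "\<bar>\<integral>x. h x \<partial>M\<bar> \<le> C"
proof -
  interpret prob_space M by fact
  have int: "integrable M h"
    by (rule integrable_const_bound[where B=C]) (use assms in auto)
  have "\<bar>\<integral>x. h x \<partial>M\<bar> \<le> (\<integral>x. \<bar>h x\<bar> \<partial>M)"
    using integral_norm_bound[of M h] by simp
  also have "\<dots> \<le> (\<integral>x. C \<partial>M)"
    by (intro integral_mono) (use assms int in auto)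
  also have "\<dots> = C" by (simp add: prob_space)
  finally show ?thesis .
qed

lemma upd_space:
  "w \<in> space (PiM I (\<lambda>_. P)) \<Longrightarrow> y \<in> space P \<Longrightarrow> w(i:=y) \<in> space (PiM (insert i I) (\<lambda>_. P))"
  by (auto simp: space_PiM PiE_def extensional_def Pi_def)

lemma mcd_mgf:
  fixes P :: "'a measure" and c B l :: real and n :: nat
  assumes P: "prob_space P" and l: "l > 0"
  shows "f \<in> borel_measurable (PiM {..<n} (\<lambda>_. P)) \<Longrightarrow>
    (\<And>w. w \<in> space (PiM {..<n} (\<lambda>_. P)) \<Longrightarrow> \<bar>f w\<bar> \<le> B) \<Longrightarrow>
    (\<And>w i y. w \<in> space (PiM {..<n} (\<lambda>_. P)) \<Longrightarrow> i < n \<Longrightarrow> y \<in> space P \<Longrightarrow> \<bar>f w - f (w(i:=y))\<bar> \<le> c) \<Longrightarrow>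
    (\<integral>\<^sup>+w. ennreal (exp (l * (f w - (\<integral>w. f w \<partial>PiM {..<n} (\<lambda>_. P))))) \<partial>PiM {..<n} (\<lambda>_. P)) \<le> ennreal (exp (l\<^sup>2 * real n * c\<^sup>2 / 8))"
proof (induction n arbitrary: f)
  case 0
  show ?case
    by (simp add: PiM_empty lebesgue_integral_count_space_finite nn_integral_count_space_finite)
next
  case (Suc n)
  interpret P: prob_space P by fact
  interpret PS: product_sigma_finite "\<lambda>_::nat. P"
    by (simp add: product_sigma_finite_def P.sigma_finite_measure_axioms)
  let ?M = "\<lambda>I. PiM I (\<lambda>_::nat. P)"
  have ins: "{..<Suc n} = insert n {..<n}" by auto
  have fm[measurable]: "f \<in> borel_measurable (?M (insert n {..<n}))" using Suc.prems(1) ins by simp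
  have fB: "\<And>w. w \<in> space (?M (insert n {..<n})) \<Longrightarrow> \<bar>f w\<bar> \<le> B" using Suc.prems(2) ins by simp
  have fc: "\<And>w i y. w \<in> space (?M (insert n {..<n})) \<Longrightarrow> i < Suc n \<Longrightarrow> y \<in> space P \<Longrightarrow> \<bar>f w - f (w(i:=y))\<bar> \<le> c"
    using Suc.prems(3)[unfolded ins] by blast
  have probM: "prob_space (?M I)" for I by (intro prob_space_PiM) (simp add: P)
  have fint: "integrable (?M (insert n {..<n})) f"
    by (rule finite_measure.integrable_const_bound[where B=B])
       (use fB probM in \<open>auto simp: prob_space_def\<close>)
  define g where "g w = (\<integral>y. f (w(n:=y)) \<partial>P)" for w
  have E: "(\<integral>w. f w \<partial>?M (insert n {..<n})) = (\<integral>w. g w \<partial>?M {..<n})"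
    unfolding g_def by (rule PS.product_integral_insert) (use fint in auto)
  have hm: "(\<lambda>y. f (w(n:=y))) \<in> borel_measurable P" if "w \<in> space (?M {..<n})" for w
    by (rule measurable_compose[OF measurable_component_update[OF that] fm]) simp
  have sp: "w(n:=y) \<in> space (?M (insert n {..<n}))" if "w \<in> space (?M {..<n})" "y \<in> space P" for w y
    by (rule upd_space[OF that])
  have gm: "g \<in> borel_measurable (?M {..<n})"
    unfolding g_def
    by (rule P.borel_measurable_lebesgue_integral[of "\<lambda>w y. f (w(n:=y))", simplified])
       (use measurable_compose[OF measurable_add_dim fm] in \<open>simp add: case_prod_unfold\<close>)
  have gB: "\<bar>g w\<bar> \<le> B" if "w \<in> space (?M {..<n})" for w
    unfolding g_def by (rule pint_abs_le[OF P hm[OF that]]) (use fB sp[OF that] in auto)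
  have gc: "\<bar>g w - g (w(i:=y))\<bar> \<le> c" if w: "w \<in> space (?M {..<n})" and i: "i < n" and y: "y \<in> space P" for w i y
  proof -
    have w': "w(i:=y) \<in> space (?M {..<n})"
      using upd_space[OF w y, of i] i by (simp add: insert_absorb)
    have int1: "integrable P (\<lambda>z. f (w(n:=z)))"
      by (rule finite_measure.integrable_const_bound[where B=B])
         (use fB sp[OF w] hm[OF w] in \<open>auto simp: P.finite_measure_axioms\<close>)
    have int2: "integrable P (\<lambda>z. f (w(i:=y,n:=z)))"
      by (rule finite_measure.integrable_const_bound[where B=B])
         (use fB sp[OF w'] hm[OF w'] in \<open>auto simp: P.finite_measure_axioms\<close>)
    have "g w - g (w(i:=y)) = (\<integral>z. f (w(n:=z)) - f (w(i:=y,n:=z)) \<partial>P)"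
      unfolding g_def by (rule Bochner_Integration.integral_diff[symmetric, OF int1 int2])
    also have "\<bar>\<dots>\<bar> \<le> c"
    proof (rule pint_abs_le[OF P])
      show "(\<lambda>z. f (w(n := z)) - f (w(i := y, n := z))) \<in> borel_measurable P"
        using hm[OF w] hm[OF w'] by measurable
      fix z assume z: "z \<in> space P"
      have "w(i:=y,n:=z) = (w(n:=z))(i:=y)" using i by (auto simp: fun_eq_iff)
      then show "\<bar>f (w(n := z)) - f (w(i := y, n := z))\<bar> \<le> c"
        using fc[OF sp[OF w z] _ y, of i] i by simp
    qed
    finally show ?thesis .
  qed
  have IH: "(\<integral>\<^sup>+w. ennreal (exp (l * (g w - (\<integral>w. g w \<partial>?M {..<n})))) \<partial>?M {..<n}) \<le> ennreal (exp (l\<^sup>2 * real n * c\<^sup>2 / 8))"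
    by (rule Suc.IH[OF gm gB gc])
  define E where "E = (\<integral>w. g w \<partial>?M {..<n})"
  have inner: "(\<integral>\<^sup>+y. ennreal (exp (l * (f (w(n:=y)) - E))) \<partial>P) \<le>
      ennreal (exp (l * (g w - E))) * ennreal (exp (l\<^sup>2 * c\<^sup>2 / 8))" if w: "w \<in> space (?M {..<n})" for w
  proof -
    define h where "h y = f (w(n:=y))" for y
    have hm': "h \<in> borel_measurable P" unfolding h_def using hm[OF w] .
    define a where "a = (INF y\<in>space P. h y)"
    have bdd: "bdd_below (h ` space P)"
      by (rule bdd_belowI[where m="-B"]) (use fB sp[OF w] in \<open>force simp: h_def\<close>)
    have ne: "space P \<noteq> {}" by (rule P.not_empty)
    have hab: "h y \<in> {a..a+c}" if y: "y \<in> space P" for y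
      unfolding atLeastAtMost_iff
    proof
      show "a \<le> h y" unfolding a_def by (rule cINF_lower[OF bdd y])
      have "h y - c \<le> a" unfolding a_def
      proof (rule cINF_greatest[OF ne])
        fix y' assume y': "y' \<in> space P"
        have "w(n:=y') = (w(n:=y))(n:=y')" by simp
        then show "h y - c \<le> h y'" using fc[OF sp[OF w y] _ y', of n] by (simp add: h_def)
      qed
      then show "h y \<le> a + c" by simp
    qed
    interpret H: interval_bounded_random_variable P h a "a+c"
      by unfold_locales (use hm' hab in auto)
    have gh: "g w = (\<integral>y. h y \<partial>P)" unfolding g_def h_def ..
    have "(\<integral>\<^sup>+y. ennreal (exp (l * (f (w(n:=y)) - E))) \<partial>P) =
       (\<integral>\<^sup>+y. ennreal (exp (l * (g w - E))) * ennreal (exp (l * (h y - (\<integral>y. h y \<partial>P)))) \<partial>P)"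
      by (intro nn_integral_cong)
        (simp add: h_def gh ennreal_mult[symmetric] exp_add[symmetric] algebra_simps)
    also have "\<dots> = ennreal (exp (l * (g w - E))) * (\<integral>\<^sup>+y. ennreal (exp (l * (h y - (\<integral>y. h y \<partial>P)))) \<partial>P)"
      by (rule nn_integral_cmult) (use hm' in measurable)
    also have "\<dots> \<le> ennreal (exp (l * (g w - E))) * ennreal (exp (l\<^sup>2 * (a + c - a)\<^sup>2 / 8))"
      by (intro mult_left_mono H.Hoeffdings_lemma_nn_integral l) simp
    finally show ?thesis by simp
  qed
  have "(\<integral>\<^sup>+w. ennreal (exp (l * (f w - (\<integral>w. f w \<partial>?M {..<Suc n})))) \<partial>?M {..<Suc n})
     = (\<integral>\<^sup>+w. ennreal (exp (l * (f w - E))) \<partial>?M (insert n {..<n}))"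
    using E by (simp add: ins E_def)
  also have "\<dots> = (\<integral>\<^sup>+w. \<integral>\<^sup>+y. ennreal (exp (l * (f (w(n:=y)) - E))) \<partial>P \<partial>?M {..<n})"
    by (rule PS.product_nn_integral_insert) auto
  also have "\<dots> \<le> (\<integral>\<^sup>+w. ennreal (exp (l\<^sup>2 * c\<^sup>2 / 8)) * ennreal (exp (l * (g w - E))) \<partial>?M {..<n})"
    by (intro nn_integral_mono) (use inner in \<open>auto simp: mult.commute\<close>)
  also have "\<dots> = ennreal (exp (l\<^sup>2 * c\<^sup>2 / 8)) * (\<integral>\<^sup>+w. ennreal (exp (l * (g w - E))) \<partial>?M {..<n})"
    by (rule nn_integral_cmult) (use gm in measurable)
  also have "\<dots> \<le> ennreal (exp (l\<^sup>2 * c\<^sup>2 / 8)) * ennreal (exp (l\<^sup>2 * real n * c\<^sup>2 / 8))"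
    by (intro mult_left_mono) (use IH in \<open>auto simp: E_def\<close>)
  also have "\<dots> = ennreal (exp (l\<^sup>2 * real (Suc n) * c\<^sup>2 / 8))"
    by (simp add: ennreal_mult[symmetric] exp_add[symmetric] algebra_simps add_divide_distrib)
  finally show ?case .
qed

lemma mcd_tail_ge:
  fixes P :: "'a measure" and f :: "(nat \<Rightarrow> 'a) \<Rightarrow> real" and c B e :: real and n :: nat
  assumes P: "prob_space P"
    and fm[measurable]: "f \<in> borel_measurable (PiM {..<n} (\<lambda>_. P))"
    and fB: "\<And>w. w \<in> space (PiM {..<n} (\<lambda>_. P)) \<Longrightarrow> \<bar>f w\<bar> \<le> B"
    and fc: "\<And>w i y. w \<in> space (PiM {..<n} (\<lambda>_. P)) \<Longrightarrow> i < n \<Longrightarrow> y \<in> space P \<Longrightarrow> \<bar>f w - f (w(i:=y))\<bar> \<le> c"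
    and d: "real n * c\<^sup>2 > 0" and e: "e > 0"
  shows "measure (PiM {..<n} (\<lambda>_. P)) {w \<in> space (PiM {..<n} (\<lambda>_. P)). f w - (\<integral>w. f w \<partial>PiM {..<n} (\<lambda>_. P)) \<ge> e}
     \<le> exp (- 2 * e\<^sup>2 / (real n * c\<^sup>2))"
proof -
  let ?M = "PiM {..<n} (\<lambda>_. P)"
  interpret Pi: prob_space ?M by (intro prob_space_PiM) (simp add: P)
  define E where "E = (\<integral>w. f w \<partial>?M)"
  define D where "D = real n * c\<^sup>2"
  define l where "l = 4 * e / D"
  have D: "D > 0" using d by (simp add: D_def)
  have l: "l > 0" using D e by (simp add: l_def)
  have "ennreal (measure ?M {w \<in> space ?M. f w - E \<ge> e}) = emeasure ?M {w \<in> space ?M. e \<le> f w - E}"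
    by (simp add: Pi.emeasure_eq_measure)
  also have "\<dots> \<le> ennreal (exp (- l * e)) * (\<integral>\<^sup>+x\<in>space ?M. ennreal (exp (l * (f x - E))) \<partial>?M)"
    by (rule Chernoff_ineq_nn_integral_ge[OF l]) auto
  also have "(\<integral>\<^sup>+x\<in>space ?M. ennreal (exp (l * (f x - E))) \<partial>?M) = (\<integral>\<^sup>+x. ennreal (exp (l * (f x - E))) \<partial>?M)"
    by (intro nn_integral_cong) simp
  also have "ennreal (exp (- l * e)) * \<dots> \<le> ennreal (exp (- l * e)) * ennreal (exp (l\<^sup>2 * real n * c\<^sup>2 / 8))"
    unfolding E_def by (intro mult_left_mono mcd_mgf[OF P l fm fB fc]) auto
  also have "\<dots> = ennreal (exp (- l * e + l\<^sup>2 * real n * c\<^sup>2 / 8))"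
    by (simp add: ennreal_mult[symmetric] exp_add[symmetric])
  also have "- l * e + l\<^sup>2 * real n * c\<^sup>2 / 8 = - 2 * e\<^sup>2 / (real n * c\<^sup>2)"
    using D unfolding l_def D_def by (simp add: field_simps power2_eq_square)
  finally show ?thesis unfolding E_def
    by (subst (asm) ennreal_le_iff) auto
qed

lemma mcd_tail_abs:
  fixes P :: "'a measure" and f :: "(nat \<Rightarrow> 'a) \<Rightarrow> real" and c B e :: real and n :: nat
  assumes P: "prob_space P"
    and fm[measurable]: "f \<in> borel_measurable (PiM {..<n} (\<lambda>_. P))"
    and fB: "\<And>w. w \<in> space (PiM {..<n} (\<lambda>_. P)) \<Longrightarrow> \<bar>f w\<bar> \<le> B"
    and fc: "\<And>w i y. w \<in> space (PiM {..<n} (\<lambda>_. P)) \<Longrightarrow> i < n \<Longrightarrow> y \<in> space P \<Longrightarrow> \<bar>f w - f (w(i:=y))\<bar> \<le> c"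
    and d: "real n * c\<^sup>2 > 0" and e: "e > 0"
  shows "measure (PiM {..<n} (\<lambda>_. P)) {w \<in> space (PiM {..<n} (\<lambda>_. P)). \<bar>f w - (\<integral>w. f w \<partial>PiM {..<n} (\<lambda>_. P))\<bar> \<ge> e}
     \<le> 2 * exp (- 2 * e\<^sup>2 / (real n * c\<^sup>2))"
proof -
  let ?M = "PiM {..<n} (\<lambda>_. P)"
  interpret Pi: prob_space ?M by (intro prob_space_PiM) (simp add: P)
  define E where "E = (\<integral>w. f w \<partial>?M)"
  have 1: "measure ?M {w \<in> space ?M. f w - E \<ge> e} \<le> exp (- 2 * e\<^sup>2 / (real n * c\<^sup>2))"
    unfolding E_def by (rule mcd_tail_ge[OF P fm fB fc d e])
  have 2: "measure ?M {w \<in> space ?M. (- f w) - (\<integral>w. - f w \<partial>?M) \<ge> e} \<le> exp (- 2 * e\<^sup>2 / (real n * c\<^sup>2))"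
    by (rule mcd_tail_ge[OF P _ _ _ d e, of "\<lambda>w. - f w" B])
       (use fB fc in \<open>auto simp: abs_minus_commute\<close>)
  have "{w \<in> space ?M. \<bar>f w - E\<bar> \<ge> e} \<subseteq> {w \<in> space ?M. f w - E \<ge> e} \<union> {w \<in> space ?M. (- f w) - (\<integral>w. - f w \<partial>?M) \<ge> e}"
    by (auto simp: E_def)
  then have "measure ?M {w \<in> space ?M. \<bar>f w - E\<bar> \<ge> e} \<le> measure ?M ({w \<in> space ?M. f w - E \<ge> e} \<union> {w \<in> space ?M. (- f w) - (\<integral>w. - f w \<partial>?M) \<ge> e})"
    by (intro Pi.finite_measure_mono) auto
  also have "\<dots> \<le> measure ?M {w \<in> space ?M. f w - E \<ge> e} + measure ?M {w \<in> space ?M. (- f w) - (\<integral>w. - f w \<partial>?M) \<ge> e}"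
    by (intro measure_Un_le) auto
  finally show ?thesis using 1 2 unfolding E_def by linarith
qed



theorem proposition7:
  fixes X :: "(real^'d) set"
    and k :: "real^'d \<Rightarrow> real"
    and P :: "(real^'d) measure"
    and \<mu> :: "((real^'d) \<times> (real^'d)) measure"
    and D :: nat
    and \<epsilon> :: real
  assumes k_cont: "continuous_on UNIV k"
    and k_pd: "positive_definite_fun k"
    and k0: "k 0 = 1"
    and P_prob: "prob_space P"
    and P_sets: "sets P = sets borel"
    and bochner: "\<And>\<Delta>. complex_of_real (k \<Delta>) = (\<integral>\<omega>. exp (\<i> * complex_of_real (\<omega> \<bullet> \<Delta>)) \<partial>P)"
    and mu_sf: "sigma_finite_measure \<mu>"
    and mu_sets: "sets \<mu> = sets (restrict_space borel (X \<times> X))"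
    and D_even: "even D"
    and D_pos: "D > 0"
    and eps_pos: "\<epsilon> > 0"
  shows "let \<Omega> = PiM {..<D div 2} (\<lambda>_. P);
             F = (\<lambda>\<omega>. sqnorm_mu \<mu> (rff_err D k \<omega>));
             E = (\<integral>\<omega>. F \<omega> \<partial>\<Omega>);
             M = measure \<mu> (X \<times> X)
         in measure \<Omega> {\<omega> \<in> space \<Omega>. \<bar>F \<omega> - E\<bar> \<ge> \<epsilon>}
              \<le> 2 * exp (- (real D ^ 3 * \<epsilon>\<^sup>2) / (8 * (4 * real D + 1)\<^sup>2 * M\<^sup>2))
          \<and> 2 * exp (- (real D ^ 3 * \<epsilon>\<^sup>2) / (8 * (4 * real D + 1)\<^sup>2 * M\<^sup>2))
              \<le> 2 * exp (- (real D * \<epsilon>\<^sup>2) / (200 * M\<^sup>2))"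
proof -
  define n where "n = D div 2"
  have Dn: "D = 2*n" using D_even unfolding n_def by simp
  have n0: "n > 0" using D_pos Dn by simp
  define Om where "Om = PiM {..<D div 2} (\<lambda>_. P)"
  define F where "F = (\<lambda>w. sqnorm_mu \<mu> (rff_err D k w))"
  define E where "E = (\<integral>w. F w \<partial>Om)"
  define M where "M = measure \<mu> (X \<times> X)"
  define R where "R = 2 * exp (- (real D ^ 3 * \<epsilon>\<^sup>2) / (8 * (4 * real D + 1)\<^sup>2 * M\<^sup>2))"
  have Omn: "Om = PiM {..<n} (\<lambda>_. P)" unfolding Om_def n_def ..
  interpret Om: prob_space Om unfolding Om_def by (intro prob_space_PiM) (simp add: P_prob)
  have D1: "real D \<ge> 1" using D_pos by simp
  define Q where "Q = real D * \<epsilon>\<^sup>2 / M\<^sup>2"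
  have Q0: "Q \<ge> 0" unfolding Q_def by simp
  have R_eq: "R = 2 * exp (- (Q * ((real D)\<^sup>2 / (8 * (4 * real D + 1)\<^sup>2))))" if "M \<noteq> 0"
    unfolding R_def Q_def using that by (simp add: field_simps power2_eq_square power3_eq_cube)
  have main: "measure Om {w \<in> space Om. \<bar>F w - E\<bar> \<ge> \<epsilon>} \<le> R"
  proof (cases "M = 0")
    case True
    have "R = 2" using True unfolding R_def by simp
    then show ?thesis using Om.prob_le_1[of "{w \<in> space Om. \<bar>F w - E\<bar> \<ge> \<epsilon>}"] by linarith
  next
    case False
    have spmu: "space \<mu> = X \<times> X"
      using sets_eq_imp_space_eq[OF mu_sets] by (simp add: space_restrict_space)
    have fin: "emeasure \<mu> (space \<mu>) \<noteq> \<infinity>"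
    proof
      assume "emeasure \<mu> (space \<mu>) = \<infinity>"
      then have "M = 0" unfolding M_def measure_def spmu[symmetric] by simp
      with False show False by simp
    qed
    interpret mu: finite_measure \<mu> by (rule finite_measureI[OF fin])
    have Mspace: "measure \<mu> (space \<mu>) = M" unfolding M_def spmu ..
    have Mpos: "M > 0" using False unfolding M_def by (simp add: order_neq_le_trans)
    have kb: "\<bar>k d\<bar> \<le> 1" for d
    proof -
      have "\<bar>k d\<bar> = norm (\<integral>w. exp (\<i> * complex_of_real (w \<bullet> d)) \<partial>P)"
        using bochner[of d] by (metis norm_of_real)
      also have "\<dots> \<le> (\<integral>w. norm (exp (\<i> * complex_of_real (w \<bullet> d))) \<partial>P)"
        by (rule integral_norm_bound)
      also have "\<dots> = (\<integral>w. 1 \<partial>P)" by (simp add: norm_exp_i_times)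
      also have "\<dots> = 1" using prob_space.prob_space[OF P_prob] by simp
      finally show ?thesis .
    qed
    have errb: "\<bar>rff_err D k w x y\<bar> \<le> 2" for w x y
    proof -
      have "\<bar>rff_err D k w x y\<bar> \<le> \<bar>\<Sum>i<n. 2 / real D * cos (w i \<bullet> x - w i \<bullet> y)\<bar> + \<bar>k (x - y)\<bar>"
        unfolding err_eq[OF Dn] by (rule abs_triangle_ineq4)
      also have "\<dots> \<le> 1 + 1" by (intro add_mono sum_cos_bound[OF Dn n0] kb)
      finally show ?thesis by simp
    qed
    have errd: "\<bar>rff_err D k (w(i:=v)) x y - rff_err D k w x y\<bar> \<le> 4 / real D" if "i < n" for w i v x y
      unfolding err_eq[OF Dn] using sum_cos_diff[OF Dn that, of "\<lambda>j. (w(i:=v)) j \<bullet> x - (w(i:=v)) j \<bullet> y" "\<lambda>j. w j \<bullet> x - w j \<bullet> y"]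
      by simp
    have sqb: "(rff_err D k w x y)\<^sup>2 \<le> 4" for w x y
    proof -
      have "(rff_err D k w x y)\<^sup>2 = \<bar>rff_err D k w x y\<bar>\<^sup>2" by simp
      also have "\<dots> \<le> 2\<^sup>2" by (rule power_mono[OF errb]) simp
      finally show ?thesis by simp
    qed
    have sqd: "\<bar>(rff_err D k w x y)\<^sup>2 - (rff_err D k (w(i:=v)) x y)\<^sup>2\<bar> \<le> 16 / real D" if "i < n" for w i v x y
    proof -
      let ?a = "rff_err D k w x y" and ?b = "rff_err D k (w(i:=v)) x y"
      have "?a\<^sup>2 - ?b\<^sup>2 = (?a - ?b) * (?a + ?b)" by (simp add: algebra_simps power2_eq_square)
      then have "\<bar>?a\<^sup>2 - ?b\<^sup>2\<bar> = \<bar>?b - ?a\<bar> * \<bar>?a + ?b\<bar>" by (simp only: abs_mult abs_minus_commute)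
      also have "\<dots> \<le> (4 / real D) * 4"
      proof (rule mult_mono)
        show "\<bar>?b - ?a\<bar> \<le> 4 / real D" by (rule errd[OF that])
        show "\<bar>?a + ?b\<bar> \<le> 4" using errb[of w x y] errb[of "w(i:=v)" x y] by linarith
      qed auto
      finally show ?thesis by simp
    qed
    have cm[measurable]: "(\<lambda>w. w j) \<in> borel_measurable Om" for j
      unfolding Om_def by (rule comp_meas[OF P_sets])
    have fstm[measurable]: "fst \<in> borel_measurable \<mu>"
      unfolding measurable_cong_sets[OF mu_sets refl]
      by (intro measurable_restrict_space1 borel_measurable_continuous_onI continuous_on_fst continuous_on_id)
    have sndm[measurable]: "snd \<in> borel_measurable \<mu>"
      unfolding measurable_cong_sets[OF mu_sets refl]
      by (intro measurable_restrict_space1 borel_measurable_continuous_onI continuous_on_snd continuous_on_id)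
    have km[measurable]: "k \<in> borel_measurable borel"
      by (rule borel_measurable_continuous_onI[OF k_cont])
    have joint: "(\<lambda>(w, p). (rff_err D k w (fst p) (snd p))\<^sup>2) \<in> borel_measurable (Om \<Otimes>\<^sub>M \<mu>)"
      unfolding rff_err_def rff_z_def by measurable
    have single: "(\<lambda>p. (rff_err D k w (fst p) (snd p))\<^sup>2) \<in> borel_measurable \<mu>" for w
      unfolding rff_err_def rff_z_def by measurable
    have Fm: "F \<in> borel_measurable Om"
      unfolding F_def sqnorm_mu_def
      by (rule sigma_finite_measure.borel_measurable_lebesgue_integral[OF mu_sf, of "\<lambda>w p. (rff_err D k w (fst p) (snd p))\<^sup>2", simplified])
         (use joint in \<open>simp add: case_prod_unfold\<close>)
    have FB: "\<bar>F w\<bar> \<le> 4 * M" for w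
      unfolding F_def sqnorm_mu_def Mspace[symmetric]
      by (rule fm_abs_le[OF mu.finite_measure_axioms single]) (use sqb in simp)
    have Fc: "\<bar>F w - F (w(i:=v))\<bar> \<le> 16 / real D * M" if "i < n" for w i v
    proof -
      have i1: "integrable \<mu> (\<lambda>p. (rff_err D k w (fst p) (snd p))\<^sup>2)" for w
        by (rule mu.integrable_const_bound[where B=4]) (use single sqb in auto)
      have "F w - F (w(i:=v)) = (\<integral>p. (rff_err D k w (fst p) (snd p))\<^sup>2 - (rff_err D k (w(i:=v)) (fst p) (snd p))\<^sup>2 \<partial>\<mu>)"
        unfolding F_def sqnorm_mu_def by (rule Bochner_Integration.integral_diff[symmetric, OF i1 i1])
      also have "\<bar>\<dots>\<bar> \<le> 16 / real D * M"
        unfolding Mspace[symmetric]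
        by (rule fm_abs_le[OF mu.finite_measure_axioms]) (use single sqd[OF that] in auto)
      finally show ?thesis .
    qed
    define c where "c = 16 / real D * M"
    have d: "real n * c\<^sup>2 > 0" using n0 Mpos D_pos unfolding c_def by simp
    have "measure Om {w \<in> space Om. \<bar>F w - E\<bar> \<ge> \<epsilon>} \<le> 2 * exp (- 2 * \<epsilon>\<^sup>2 / (real n * c\<^sup>2))"
      unfolding E_def Omn
      by (rule mcd_tail_abs[OF P_prob Fm[unfolded Omn] _ _ d eps_pos, of "4 * M"])
         (use FB Fc in \<open>auto simp: c_def\<close>)
    also have "- 2 * \<epsilon>\<^sup>2 / (real n * c\<^sup>2) = - (Q * (1/64))"
      unfolding c_def Q_def using Dn Mpos n0 by (simp add: field_simps power2_eq_square)
    also have "2 * exp (- (Q * (1/64))) \<le> R"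
      unfolding R_eq[OF False]
      by (intro mult_left_mono exp_le_cancel_iff[THEN iffD2] le_imp_neg_le mult_left_mono[OF arith1(2)[OF D1] Q0]) auto
    finally show ?thesis .
  qed
  have second: "R \<le> 2 * exp (- (real D * \<epsilon>\<^sup>2) / (200 * M\<^sup>2))"
  proof (cases "M = 0")
    case True then show ?thesis unfolding R_def by simp
  next
    case False
    have "- (real D * \<epsilon>\<^sup>2) / (200 * M\<^sup>2) = - (Q * (1/200))"
      unfolding Q_def using False by (simp add: field_simps)
    then show ?thesis unfolding R_eq[OF False]
      by (simp only:) (intro mult_left_mono exp_le_cancel_iff[THEN iffD2] le_imp_neg_le mult_left_mono[OF arith1(1)[OF D1] Q0], auto)
  qed
  show ?thesis unfolding Let_def
    using main[unfolded Om_def F_def E_def M_def R_def] second[unfolded R_def M_def]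
    unfolding Om_def F_def E_def M_def by blast
qed

end
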